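(* Let $n \geq 2$ be an integer and let $F$ be any field of characteristic zero. For $a = (a_1,\dots,a_{n-1}) \in F^{n-1}$ define the polynomials $Q_a(x) = n(x - a_1/n)(x-a_2)\cdots(x-a_{n-1}) \in F[x]$ and $P_{a,0}(x) = \int_0^x Q_a(t)\,dt \in F[x]$ (the unique antiderivative of $Q_a$ with zero constant term). Then there exist $a_1,\dots,a_{n-1} \in F$ such that the values $P_{a,0}(a_1/n), P_{a,0}(a_2), \dots, P_{a,0}(a_{n-1})$ are pairwise distinct. *)

theory Defs
  imports "HOL-Computational_Algebra.Polynomial"
begin

definition poly_antideriv :: "'a::field_char_0 poly \<Rightarrow> 'a poly" where
  "poly_antideriv p = Poly (0 # map (\<lambda>i. coeff p i / of_nat (Suc i)) [0..<Suc (degree p)])"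

definition Qpoly :: "nat \<Rightarrow> (nat \<Rightarrow> 'a::field_char_0) \<Rightarrow> 'a poly" where
  "Qpoly n a = smult (of_nat n) ([:- (a 1 / of_nat n), 1:] * (\<Prod>i\<in>{2..n-1}. [:- a i, 1:]))"

definition Ppoly0 :: "nat \<Rightarrow> (nat \<Rightarrow> 'a::field_char_0) \<Rightarrow> 'a poly" where
  "Ppoly0 n a = poly_antideriv (Qpoly n a)"

definition crit_pt :: "nat \<Rightarrow> (nat \<Rightarrow> 'a::field_char_0) \<Rightarrow> nat \<Rightarrow> 'a" where
  "crit_pt n a i = (if i = 1 then a 1 / of_nat n else a i)"

end

theory Submission
  imports Defs
begin

lemma coeff_antideriv:
  "coeff (poly_antideriv p) k = (if k = 0 then 0 else coeff p (k - 1) / of_nat k)"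
proof (cases k)
  case 0 then show ?thesis by (simp add: poly_antideriv_def coeff_Poly_eq)
next
  case (Suc i)
  show ?thesis
  proof (cases "i \<le> degree p")
    case True
    then have "i < length [0..<Suc (degree p)]" by simp
    then show ?thesis using Suc True
      by (simp add: poly_antideriv_def coeff_Poly_eq nth_default_def del: upt_Suc)
  next
    case False
    then have "coeff p i = 0" by (simp add: coeff_eq_0)
    then show ?thesis using Suc False
      by (simp add: poly_antideriv_def coeff_Poly_eq nth_default_def del: upt_Suc)
  qed
qed

lemma antideriv_diff: "poly_antideriv (p - q) = poly_antideriv p - poly_antideriv q"
  by (rule poly_eqI) (simp add: coeff_antideriv diff_divide_distrib)

lemma antideriv_smult: "poly_antideriv (smult c p) = smult c (poly_antideriv p)"
  by (rule poly_eqI) (simp add: coeff_antideriv)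

definition Rp :: "nat \<Rightarrow> (nat \<Rightarrow> 'a::field_char_0) \<Rightarrow> 'a poly" where
  "Rp m b = (\<Prod>i\<in>{1..m}. [:- b i, 1:])"

lemma Rp_degree: "degree (Rp m b) = m"
  unfolding Rp_def by (subst degree_prod_sum_eq) auto

lemma Rp_lead: "coeff (Rp m b) m = 1"
proof -
  have "lead_coeff (Rp m b) = 1" unfolding Rp_def lead_coeff_prod by simp
  then show ?thesis using Rp_degree[of m b] by simp
qed

lemma Rp_Suc: "Rp (Suc m) b = pCons 0 (Rp m b) - smult (b (Suc m)) (Rp m b)"
proof -
  have "Rp (Suc m) b = [:- b (Suc m), 1:] * Rp m b"
    unfolding Rp_def by (simp add: atLeastAtMostSuc_conv mult.commute)
  also have "\<dots> = pCons 0 (Rp m b) - smult (b (Suc m)) (Rp m b)"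
    by (simp add: mult_pCons_left)
  finally show ?thesis .
qed

lemma Rp_cong: "(\<And>i. i \<in> {1..m} \<Longrightarrow> b i = b' i) \<Longrightarrow> Rp m b = Rp m b'"
  unfolding Rp_def by (rule prod.cong) auto

lemma general:
  "\<exists>b :: nat \<Rightarrow> 'a::field_char_0.
     inj_on (\<lambda>i. poly (poly_antideriv (Rp m b)) (b i)) {1..m}"
proof (induction m)
  case 0 then show ?case by simp
next
  case (Suc m)
  then obtain b :: "nat \<Rightarrow> 'a" where inj: "inj_on (\<lambda>i. poly (poly_antideriv (Rp m b)) (b i)) {1..m}"
    by blast
  define R where "R = Rp m b"
  define c where "c i = poly (poly_antideriv (pCons 0 R)) (b i)" for i
  define d where "d i = poly (poly_antideriv R) (b i)" for i
  define H0 where "H0 = poly_antideriv (pCons 0 R) - pCons 0 (poly_antideriv R)"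
  have cH0: "coeff H0 (Suc (Suc m)) = 1 / of_nat (Suc (Suc m)) - 1 / of_nat (Suc m)"
    unfolding H0_def R_def by (simp add: coeff_antideriv Rp_lead)
  have cH0nz: "coeff H0 (Suc (Suc m)) \<noteq> 0"
  proof
    assume "coeff H0 (Suc (Suc m)) = 0"
    then have "1 / (of_nat (Suc (Suc m)) :: 'a) = 1 / of_nat (Suc m)" using cH0 by simp
    then have "(of_nat (Suc (Suc m)) :: 'a) = of_nat (Suc m)"
      by (simp only: inverse_eq_divide[symmetric] inverse_eq_iff_eq)
    then show False by (simp only: of_nat_eq_iff)
  qed
  define Bad1 where "Bad1 = (\<Union>p\<in>{(i,j). i \<in> {1..m} \<and> j \<in> {1..m} \<and> i \<noteq> j}.
      {x. poly [:c (fst p) - c (snd p), d (snd p) - d (fst p):] x = 0})"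
  define Bad2 where "Bad2 = (\<Union>i\<in>{1..m}. {x. poly (H0 - [:c i, - d i:]) x = 0})"
  have fin1: "finite Bad1" unfolding Bad1_def
  proof (rule finite_UN_I)
    show "finite {(i,j). i \<in> {1..m} \<and> j \<in> {1..m} \<and> i \<noteq> j}"
    proof (rule finite_subset)
      show "{(i,j). i \<in> {1..m} \<and> j \<in> {1..m} \<and> i \<noteq> j} \<subseteq> {1..m} \<times> {1..m}" by blast
    qed simp
  next
    fix p assume p: "p \<in> {(i,j). i \<in> {1..m} \<and> j \<in> {1..m} \<and> i \<noteq> j}"
    then obtain i j where ij: "p = (i,j)" "i \<in> {1..m}" "j \<in> {1..m}" "i \<noteq> j" by blast
    have "d j \<noteq> d i"
    proof
      assume "d j = d i"
      then have "j = i" using inj_onD[OF inj _ ij(3) ij(2)] unfolding d_def R_def by simp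
      then show False using ij(4) by simp
    qed
    then have "d (snd p) \<noteq> d (fst p)" using ij(1) by simp
    then have "[:c (fst p) - c (snd p), d (snd p) - d (fst p):] \<noteq> 0" by simp
    then show "finite {x. poly [:c (fst p) - c (snd p), d (snd p) - d (fst p):] x = 0}"
      by (rule poly_roots_finite)
  qed
  have fin2: "finite Bad2" unfolding Bad2_def
  proof (rule finite_UN_I)
    fix i
    have "coeff (H0 - [:c i, - d i:]) (Suc (Suc m)) \<noteq> 0" using cH0nz by simp
    then have "H0 - [:c i, - d i:] \<noteq> 0" by auto
    then show "finite {x. poly (H0 - [:c i, - d i:]) x = 0}" by (rule poly_roots_finite)
  qed simp
  obtain X where X: "X \<notin> Bad1 \<union> Bad2"
    using ex_new_if_finite[OF infinite_UNIV_char_0, of "Bad1 \<union> Bad2"] fin1 fin2 by auto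
  define b' where "b' = b(Suc m := X)"
  have R': "Rp m b' = R" unfolding R_def by (rule Rp_cong) (auto simp: b'_def)
  have RS: "Rp (Suc m) b' = pCons 0 R - smult X R"
    using Rp_Suc[of m b'] R' by (simp add: b'_def)
  have A: "poly_antideriv (Rp (Suc m) b') = poly_antideriv (pCons 0 R) - smult X (poly_antideriv R)"
    by (simp add: RS antideriv_diff antideriv_smult)
  have vold: "poly (poly_antideriv (Rp (Suc m) b')) (b' i) = c i - X * d i" if "i \<in> {1..m}" for i
    using that unfolding A by (simp add: b'_def c_def d_def)
  have vnew: "poly (poly_antideriv (Rp (Suc m) b')) (b' (Suc m)) = poly H0 X"
    unfolding A H0_def by (simp add: b'_def)
  show ?case
  proof (rule exI[of _ b'], rule inj_onI)
    fix i j
    assume i: "i \<in> {1..Suc m}" and j: "j \<in> {1..Suc m}"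
      and eq: "poly (poly_antideriv (Rp (Suc m) b')) (b' i) = poly (poly_antideriv (Rp (Suc m) b')) (b' j)"
    have new_old: False if k: "k \<in> {1..m}"
      and e: "poly (poly_antideriv (Rp (Suc m) b')) (b' (Suc m)) = poly (poly_antideriv (Rp (Suc m) b')) (b' k)" for k
    proof -
      have "poly H0 X = c k - X * d k" using e vold[OF k] vnew by simp
      then have "poly (H0 - [:c k, - d k:]) X = 0" by simp
      then have "X \<in> Bad2" using k unfolding Bad2_def by blast
      then show False using X by blast
    qed
    show "i = j"
    proof (cases "i = Suc m")
      case True
      show ?thesis
      proof (rule ccontr)
        assume "i \<noteq> j"
        then have "j \<in> {1..m}" using j True by auto
        then show False using new_old eq True by blast
      qed
    next
      case iF: False
      then have i': "i \<in> {1..m}" using i by auto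
      show ?thesis
      proof (cases "j = Suc m")
        case True
        then show ?thesis using new_old[OF i'] eq by auto
      next
        case False
        then have j': "j \<in> {1..m}" using j by auto
        show ?thesis
        proof (rule ccontr)
          assume ne: "i \<noteq> j"
          have "c i - X * d i = c j - X * d j" using eq vold[OF i'] vold[OF j'] by simp
          then have "poly [:c i - c j, d j - d i:] X = 0" by (simp add: algebra_simps)
          then have "X \<in> {x. poly [:c (fst (i,j)) - c (snd (i,j)), d (snd (i,j)) - d (fst (i,j)):] x = 0}" by simp
          moreover have "(i,j) \<in> {(i,j). i \<in> {1..m} \<and> j \<in> {1..m} \<and> i \<noteq> j}" using i' j' ne by simp
          ultimately have "X \<in> Bad1" unfolding Bad1_def by (rule UN_I[rotated])
          then show False using X by blast
        qed
      qed
    qed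
  qed
qed

theorem lemma2p4:
  fixes n :: nat
  assumes "n \<ge> 2"
  shows "\<exists>a :: nat \<Rightarrow> 'a::field_char_0.
           inj_on (\<lambda>i. poly (Ppoly0 n a) (crit_pt n a i)) {1..n-1}"
proof -
  obtain b :: "nat \<Rightarrow> 'a" where inj: "inj_on (\<lambda>i. poly (poly_antideriv (Rp (n-1) b)) (b i)) {1..n-1}"
    using general by blast
  define a where "a = b(1 := of_nat n * b 1)"
  have n0: "(of_nat n :: 'a) \<noteq> 0" using assms by simp
  have crit: "crit_pt n a i = b i" for i
    using n0 by (simp add: crit_pt_def a_def)
  have "{1..n-1} = insert 1 {2..n-1}" using assms by auto
  then have "Rp (n-1) b = [:- b 1, 1:] * (\<Prod>i\<in>{2..n-1}. [:- b i, 1:])"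
    unfolding Rp_def by simp
  also have "(\<Prod>i\<in>{2..n-1}. [:- b i, 1:]) = (\<Prod>i\<in>{2..n-1}. [:- a i, 1:])"
    by (rule prod.cong) (auto simp: a_def)
  finally have Q: "Qpoly n a = smult (of_nat n) (Rp (n-1) b)"
    using n0 by (simp add: Qpoly_def a_def)
  have P: "poly (Ppoly0 n a) (crit_pt n a i) = of_nat n * poly (poly_antideriv (Rp (n-1) b)) (b i)" for i
    by (simp add: Ppoly0_def Q antideriv_smult crit)
  show ?thesis
  proof (rule exI[of _ a], rule inj_onI)
    fix i j assume "i \<in> {1..n-1}" "j \<in> {1..n-1}"
      "poly (Ppoly0 n a) (crit_pt n a i) = poly (Ppoly0 n a) (crit_pt n a j)"
    then show "i = j" using inj n0 unfolding P inj_on_def by simp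
  qed
qed

end
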